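(* Let $s\ge 2$ be an even integer, $n=s^2$, and $k\ge1$. Let $\mathcal{G}^{2d}$ be the $s\times s$ two-dimensional grid graph, whose nodes are the pairs $(a,b)$ with $1\le a,b\le s$ and in which $(a,b)$ and $(a',b')$ are adjacent iff $|a-a'|+|b-b'|=1$. Then $$M^{\mathcal{G}^{2d}}_{k,n}\le 2M^C_{k,\,n/2-\sqrt n/2}+M^C_{k,\sqrt n}+2 .$$
   Context: For a graph $G$ on $n$ nodes, a measurement matrix for $G$ is a $0$-$1$ matrix with columns indexed by the nodes in which every nonzero row has a support that induces a connected subgraph of $G$. A vector is $k$-sparse if it has at most $k$ nonzero entries. $A$ identifies all $k$-sparse vectors if $Ax_1\ne Ax_2$ for every two distinct $k$-sparse $x_1,x_2\in\mathbb{R}^n$. $M^G_{k,n}$ is the minimum number of rows of a measurement matrix for $G$ that identifies all $k$-sparse vectors. $M^C_{k,N}$ is the minimum number of rows of an arbitrary $0$-$1$ matrix with $N$ columns that identifies all $k$-sparse vectors in $\mathbb{R}^N$. *)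

theory Defs
  imports Complex_Main
begin

text \<open>A 0-1 matrix with m rows and columns indexed by a finite set V is represented
  by the supports of its rows: R i \<subseteq> V for i < m.\<close>

definition zero_one_matrix :: "'a set \<Rightarrow> (nat \<Rightarrow> 'a set) \<Rightarrow> nat \<Rightarrow> bool" where
  "zero_one_matrix V R m \<longleftrightarrow> (\<forall>i<m. R i \<subseteq> V)"

definition mat_apply :: "(nat \<Rightarrow> 'a set) \<Rightarrow> ('a \<Rightarrow> real) \<Rightarrow> nat \<Rightarrow> real" where
  "mat_apply R x i = (\<Sum>j\<in>R i. x j)"

definition sparse_vec :: "'a set \<Rightarrow> nat \<Rightarrow> ('a \<Rightarrow> real) \<Rightarrow> bool" where
  "sparse_vec V k x \<longleftrightarrow> (\<forall>j. j \<notin> V \<longrightarrow> x j = 0) \<and> card {j\<in>V. x j \<noteq> 0} \<le> k"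

definition identifies :: "'a set \<Rightarrow> (nat \<Rightarrow> 'a set) \<Rightarrow> nat \<Rightarrow> nat \<Rightarrow> bool" where
  "identifies V R m k \<longleftrightarrow>
     (\<forall>x1 x2. sparse_vec V k x1 \<and> sparse_vec V k x2 \<and> x1 \<noteq> x2 \<longrightarrow>
        (\<exists>i<m. mat_apply R x1 i \<noteq> mat_apply R x2 i))"

definition induces_connected :: "('a \<Rightarrow> 'a \<Rightarrow> bool) \<Rightarrow> 'a set \<Rightarrow> bool" where
  "induces_connected E S \<longleftrightarrow>
     (\<forall>u\<in>S. \<forall>v\<in>S. (\<lambda>a b. E a b \<and> a \<in> S \<and> b \<in> S)\<^sup>*\<^sup>* u v)"

definition measurement_matrix :: "'a set \<Rightarrow> ('a \<Rightarrow> 'a \<Rightarrow> bool) \<Rightarrow> (nat \<Rightarrow> 'a set) \<Rightarrow> nat \<Rightarrow> bool" where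
  "measurement_matrix V E R m \<longleftrightarrow>
     zero_one_matrix V R m \<and> (\<forall>i<m. R i \<noteq> {} \<longrightarrow> induces_connected E (R i))"

text \<open>M^G_{k,n} for the graph (V,E), n = card V.\<close>
definition M_G :: "'a set \<Rightarrow> ('a \<Rightarrow> 'a \<Rightarrow> bool) \<Rightarrow> nat \<Rightarrow> nat" where
  "M_G V E k = (LEAST m. \<exists>R. measurement_matrix V E R m \<and> identifies V R m k)"

definition M_C :: "nat \<Rightarrow> nat \<Rightarrow> nat" where
  "M_C k N = (LEAST m. \<exists>R. zero_one_matrix {0..<N} R m \<and> identifies {0..<N} R m k)"

definition grid_V :: "nat \<Rightarrow> (nat \<times> nat) set" where
  "grid_V s = {1..s} \<times> {1..s}"

definition grid_E :: "(nat \<times> nat) \<Rightarrow> (nat \<times> nat) \<Rightarrow> bool" where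
  "grid_E p q \<longleftrightarrow> \<bar>int (fst p) - int (fst q)\<bar> + \<bar>int (snd p) - int (snd q)\<bar> = 1"

end

theory Submission
  imports Defs
begin


definition rc :: "('a \<Rightarrow> 'a \<Rightarrow> bool) \<Rightarrow> 'a set \<Rightarrow> 'a \<Rightarrow> 'a \<Rightarrow> bool" where
  "rc E S = (\<lambda>a b. E a b \<and> a \<in> S \<and> b \<in> S)"

lemma rc_sym:
  assumes "\<And>a b. E a b \<Longrightarrow> E b a" and "(rc E S)\<^sup>*\<^sup>* u v"
  shows "(rc E S)\<^sup>*\<^sup>* v u"
proof -
  have "symp (rc E S)" unfolding rc_def by (auto intro!: sympI assms(1))
  then have "symp ((rc E S)\<^sup>*\<^sup>*)" by (rule symp_rtranclp)
  then show ?thesis using assms(2) by (auto dest: sympD)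
qed

lemma rc_mono: "S \<subseteq> T \<Longrightarrow> (rc E S)\<^sup>*\<^sup>* u v \<Longrightarrow> (rc E T)\<^sup>*\<^sup>* u v"
  by (rule mono_rtranclp[rule_format, of "rc E S" "rc E T"]) (auto simp: rc_def)

lemma conn_hub:
  assumes sym: "\<And>a b. E a b \<Longrightarrow> E b a"
    and hub: "\<forall>u\<in>S. (rc E S)\<^sup>*\<^sup>* u c"
  shows "induces_connected E S"
  unfolding induces_connected_def rc_def[symmetric]
proof (intro ballI)
  fix u v assume "u \<in> S" "v \<in> S"
  then have "(rc E S)\<^sup>*\<^sup>* u c" "(rc E S)\<^sup>*\<^sup>* v c" using hub by auto
  moreover have "(rc E S)\<^sup>*\<^sup>* c v" using rc_sym[of E S v c, OF sym] \<open>(rc E S)\<^sup>*\<^sup>* v c\<close> by blast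
  ultimately show "(rc E S)\<^sup>*\<^sup>* u v" by (meson rtranclp_trans)
qed

lemma conn_union:
  assumes sym: "\<And>a b. E a b \<Longrightarrow> E b a"
    and H: "induces_connected E H"
    and A: "\<forall>v\<in>A. \<exists>h\<in>H. E v h"
    and ne: "H \<noteq> {}"
  shows "induces_connected E (H \<union> A)"
proof -
  obtain c where c: "c \<in> H" using ne by auto
  have "\<forall>u\<in>H \<union> A. (rc E (H \<union> A))\<^sup>*\<^sup>* u c"
  proof
    fix u assume u: "u \<in> H \<union> A"
    have hc: "(rc E (H \<union> A))\<^sup>*\<^sup>* h c" if "h \<in> H" for h
      using H that c unfolding induces_connected_def rc_def[symmetric]
      by (meson rc_mono sup_ge1)
    show "(rc E (H \<union> A))\<^sup>*\<^sup>* u c"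
    proof (cases "u \<in> H")
      case True then show ?thesis using hc by auto
    next
      case False
      then have "u \<in> A" using u by auto
      then obtain h where h: "h \<in> H" "E u h" using A by auto
      then have "rc E (H \<union> A) u h" using u unfolding rc_def by auto
      then show ?thesis using hc[OF h(1)] by (meson converse_rtranclp_into_rtranclp)
    qed
  qed
  then show ?thesis using conn_hub[of E "H \<union> A" c] sym by blast
qed

lemma grid_E_sym: "grid_E a b \<Longrightarrow> grid_E b a"
  unfolding grid_E_def by auto

lemma col_path:
  assumes "\<forall>c. a \<le> c \<and> c \<le> a + d \<longrightarrow> (c, b) \<in> S"
  shows "(rc grid_E S)\<^sup>*\<^sup>* (a, b) (a + d, b)"
  using assms
proof (induction d)
  case 0 then show ?case by simp
next
  case (Suc d)
  then have "(rc grid_E S)\<^sup>*\<^sup>* (a, b) (a + d, b)" by auto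
  moreover have "rc grid_E S (a + d, b) (a + Suc d, b)"
    using Suc.prems unfolding rc_def grid_E_def by auto
  ultimately show ?case by (meson rtranclp.rtrancl_into_rtrancl)
qed

lemma row_path:
  assumes "\<forall>c. b \<le> c \<and> c \<le> b + d \<longrightarrow> (a, c) \<in> S"
  shows "(rc grid_E S)\<^sup>*\<^sup>* (a, b) (a, b + d)"
  using assms
proof (induction d)
  case 0 then show ?case by simp
next
  case (Suc d)
  then have "(rc grid_E S)\<^sup>*\<^sup>* (a, b) (a, b + d)" by auto
  moreover have "rc grid_E S (a, b + d) (a, b + Suc d)"
    using Suc.prems unfolding rc_def grid_E_def by auto
  ultimately show ?case by (meson rtranclp.rtrancl_into_rtrancl)
qed

lemma M_C_exists: "\<exists>R. zero_one_matrix {0..<N} R N \<and> identifies {0..<N} R N k"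
proof (intro exI conjI)
  show "zero_one_matrix {0..<N} (\<lambda>i. {i}) N" unfolding zero_one_matrix_def by auto
  show "identifies {0..<N} (\<lambda>i. {i}) N k"
    unfolding identifies_def mat_apply_def sparse_vec_def
  proof (intro allI impI)
    fix x1 x2 :: "nat \<Rightarrow> real"
    assume a: "((\<forall>j. j \<notin> {0..<N} \<longrightarrow> x1 j = 0) \<and> card {j \<in> {0..<N}. x1 j \<noteq> 0} \<le> k) \<and>
         ((\<forall>j. j \<notin> {0..<N} \<longrightarrow> x2 j = 0) \<and> card {j \<in> {0..<N}. x2 j \<noteq> 0} \<le> k) \<and> x1 \<noteq> x2"
    then obtain j where "x1 j \<noteq> x2 j" by (meson ext)
    with a have "j < N" by force
    then show "\<exists>i<N. (\<Sum>j\<in>{i}. x1 j) \<noteq> (\<Sum>j\<in>{i}. x2 j)" using \<open>x1 j \<noteq> x2 j\<close> by auto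
  qed
qed

lemma M_C_spec: "\<exists>R. zero_one_matrix {0..<N} R (M_C k N) \<and> identifies {0..<N} R (M_C k N) k"
  unfolding M_C_def by (rule LeastI_ex) (rule exI, rule M_C_exists)

lemma transport:
  fixes f :: "nat \<Rightarrow> 'a" and x1 x2 :: "'a \<Rightarrow> real"
  assumes idR: "identifies {0..<N} R m k" and zR: "zero_one_matrix {0..<N} R m"
    and inj: "inj_on f {0..<N}" and sub: "f ` {0..<N} \<subseteq> V" and finV: "finite V"
    and sp1: "sparse_vec V k x1" and sp2: "sparse_vec V k x2"
    and eq: "\<forall>i<m. sum x1 (f ` R i) = sum x2 (f ` R i)"
  shows "\<forall>j<N. x1 (f j) = x2 (f j)"
proof -
  define y where "y x = (\<lambda>j. if j < N then x (f j) else 0)" for x :: "'a \<Rightarrow> real"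
  have spy: "sparse_vec {0..<N} k (y x)" if sp: "sparse_vec V k x" for x
  proof -
    have "card {j \<in> {0..<N}. y x j \<noteq> 0} \<le> card {v \<in> V. x v \<noteq> 0}"
    proof (rule card_inj_on_le[of f])
      show "inj_on f {j \<in> {0..<N}. y x j \<noteq> 0}" using inj by (rule inj_on_subset) auto
      show "f ` {j \<in> {0..<N}. y x j \<noteq> 0} \<subseteq> {v \<in> V. x v \<noteq> 0}"
        using sub by (auto simp: y_def)
      show "finite {v \<in> V. x v \<noteq> 0}" using finV by auto
    qed
    then show ?thesis using sp unfolding sparse_vec_def by (auto simp: y_def)
  qed
  have ma: "mat_apply R (y x) i = sum x (f ` R i)" if "i < m" for x i
  proof -
    have Ri: "R i \<subseteq> {0..<N}" using zR that unfolding zero_one_matrix_def by auto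
    have "sum x (f ` R i) = sum (x \<circ> f) (R i)"
      by (rule sum.reindex) (rule inj_on_subset[OF inj Ri])
    also have "\<dots> = sum (y x) (R i)" using Ri by (intro sum.cong) (auto simp: y_def)
    finally show ?thesis unfolding mat_apply_def by simp
  qed
  have "y x1 = y x2"
  proof (rule ccontr)
    assume "y x1 \<noteq> y x2"
    then obtain i where "i < m" "mat_apply R (y x1) i \<noteq> mat_apply R (y x2) i"
      using idR spy[OF sp1] spy[OF sp2] unfolding identifies_def by blast
    then show False using ma eq by auto
  qed
  then show ?thesis unfolding y_def by (metis (full_types))
qed



lemma grid_facts:
  fixes s h N :: nat
  assumes s: "s = 2 * h" "h \<ge> 1" and N: "N = (s - 1) * h"
  defines "f1 \<equiv> \<lambda>j. (j div h + 1, 2 * (j mod h) + 1)"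
    and "f2 \<equiv> \<lambda>j. (j div h + 1, 2 * (j mod h) + 2)"
    and "X \<equiv> {1..s-1} \<times> {1..s}"
  shows "inj_on f1 {0..<N}" "inj_on f2 {0..<N}"
    "f1 ` {0..<N} \<union> f2 ` {0..<N} = X"
    "\<And>j. j < N \<Longrightarrow> odd (snd (f1 j)) \<and> even (snd (f2 j))"
proof -
  have b: "j div h < s - 1" "j mod h < h" if "j < N" for j
    using that s N by (auto simp: less_mult_imp_div_less)
  show i1: "inj_on f1 {0..<N}" unfolding f1_def
    by (rule inj_onI) (metis Pair_inject add_right_imp_eq mult_left_cancel
        div_mult_mod_eq zero_neq_numeral)
  show i2: "inj_on f2 {0..<N}" unfolding f2_def
    by (rule inj_onI) (metis Pair_inject add_right_imp_eq mult_left_cancel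
        div_mult_mod_eq zero_neq_numeral)
  show par: "\<And>j. j < N \<Longrightarrow> odd (snd (f1 j)) \<and> even (snd (f2 j))" unfolding f1_def f2_def by auto
  have sub: "f1 ` {0..<N} \<union> f2 ` {0..<N} \<subseteq> X"
    unfolding X_def f1_def f2_def using b s by fastforce
  have dis: "f1 ` {0..<N} \<inter> f2 ` {0..<N} = {}"
    unfolding f1_def f2_def by (auto, metis even_Suc dvd_triv_left)
  have "card (f1 ` {0..<N} \<union> f2 ` {0..<N}) = N + N"
    using card_Un_disjoint[OF _ _ dis] card_image[OF i1] card_image[OF i2] by simp
  also have "\<dots> = card X" unfolding X_def using s N by (simp add: card_cartesian_product)
  finally show "f1 ` {0..<N} \<union> f2 ` {0..<N} = X"
    by (intro card_subset_eq sub) (auto simp: X_def)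
qed


lemma comb_conn:
  fixes s :: nat
  assumes "s \<ge> 1"
  shows "induces_connected grid_E {p \<in> grid_V s. P (snd p) \<or> fst p = s}"
proof -
  let ?H = "{p \<in> grid_V s. P (snd p) \<or> fst p = s}"
  have row: "(rc grid_E ?H)\<^sup>*\<^sup>* (s, b) (s, s)" if "1 \<le> b" "b \<le> s" for b
  proof -
    have "(rc grid_E ?H)\<^sup>*\<^sup>* (s, b) (s, b + (s - b))"
      by (rule row_path) (use that in \<open>auto simp: grid_V_def\<close>)
    then show ?thesis using that by simp
  qed
  have "\<forall>u\<in>?H. (rc grid_E ?H)\<^sup>*\<^sup>* u (s, s)"
  proof
    fix u assume u: "u \<in> ?H"
    obtain a b where ab: "u = (a, b)" by (cases u)
    have c: "1 \<le> a" "a \<le> s" "1 \<le> b" "b \<le> s" "P b \<or> a = s" using u ab by (auto simp: grid_V_def)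
    show "(rc grid_E ?H)\<^sup>*\<^sup>* u (s, s)"
    proof (cases "a = s")
      case True then show ?thesis using ab row[OF c(3,4)] by simp
    next
      case False
      then have Pb: "P b" using c by simp
      have "(rc grid_E ?H)\<^sup>*\<^sup>* (a, b) (a + (s - a), b)"
        by (rule col_path) (use c Pb in \<open>auto simp: grid_V_def\<close>)
      then have "(rc grid_E ?H)\<^sup>*\<^sup>* (a, b) (s, b)" using c by simp
      then show ?thesis using row[OF c(3,4)] ab rtranclp_trans[of "rc grid_E ?H"] by blast
    qed
  qed
  then show ?thesis using conn_hub[of grid_E ?H "(s,s)"] grid_E_sym by blast
qed

lemma rect_conn:
  fixes s :: nat
  assumes "s \<ge> 2"
  shows "induces_connected grid_E ({1..s-1} \<times> {1..s})"
proof -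
  let ?H = "{1..s-1} \<times> {1..s}"
  have "\<forall>u\<in>?H. (rc grid_E ?H)\<^sup>*\<^sup>* u (1, 1)"
  proof
    fix u assume u: "u \<in> ?H"
    obtain a b where ab: "u = (a, b)" by (cases u)
    have c: "1 \<le> a" "a \<le> s - 1" "1 \<le> b" "b \<le> s" using u ab by auto
    have "(rc grid_E ?H)\<^sup>*\<^sup>* (1, 1) (1 + (a - 1), 1)"
      by (rule col_path) (use c assms in auto)
    then have 1: "(rc grid_E ?H)\<^sup>*\<^sup>* (1, 1) (a, 1)" using c by simp
    have "(rc grid_E ?H)\<^sup>*\<^sup>* (a, 1) (a, 1 + (b - 1))"
      by (rule row_path) (use c assms in auto)
    then have 2: "(rc grid_E ?H)\<^sup>*\<^sup>* (a, 1) (a, b)" using c by simp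
    have "(rc grid_E ?H)\<^sup>*\<^sup>* (1, 1) (a, b)" using 1 2 rtranclp_trans[of "rc grid_E ?H"] by blast
    then show "(rc grid_E ?H)\<^sup>*\<^sup>* u (1, 1)" using ab rc_sym[of grid_E ?H "(1,1)" "(a,b)", OF grid_E_sym] by simp
  qed
  then show ?thesis using conn_hub[of grid_E ?H "(1,1)"] grid_E_sym by blast
qed


theorem mainTheorem7:
  fixes s n k :: nat
  assumes "even s" and "s \<ge> 2" and "n = s ^ 2" and "k \<ge> 1"
  shows "M_G (grid_V s) grid_E k \<le> 2 * M_C k (n div 2 - s div 2) + M_C k s + 2"
proof -
  obtain h where s: "s = 2 * h" using assms(1) by blast
  have h1: "h \<ge> 1" using assms(2) s by simp
  define N where "N = (s - 1) * h"
  have NN: "n div 2 - s div 2 = N"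
  proof -
    have "n div 2 = 2 * h * h" using assms(3) s by (simp add: power2_eq_square)
    moreover have "N = 2 * h * h - h" unfolding N_def s by (simp add: diff_mult_distrib)
    ultimately show ?thesis using s by simp
  qed
  define m1 where "m1 = M_C k N"
  define m3 where "m3 = M_C k s"
  obtain R1 where R1: "zero_one_matrix {0..<N} R1 m1" "identifies {0..<N} R1 m1 k"
    using M_C_spec unfolding m1_def by blast
  obtain R3 where R3: "zero_one_matrix {0..<s} R3 m3" "identifies {0..<s} R3 m3 k"
    using M_C_spec unfolding m3_def by blast
  define f1 where "f1 = (\<lambda>j::nat. (j div h + 1, 2 * (j mod h) + 1))"
  define f2 where "f2 = (\<lambda>j::nat. (j div h + 1, 2 * (j mod h) + 2))"
  define g where "g = (\<lambda>j::nat. (s, j + 1))"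
  define X where "X = {1..s-1} \<times> {1..s}"
  define V where "V = grid_V s"
  define H1 where "H1 = {p \<in> grid_V s. even (snd p) \<or> fst p = s}"
  define H2 where "H2 = {p \<in> grid_V s. odd (snd p) \<or> fst p = s}"
  have gf: "inj_on f1 {0..<N}" "inj_on f2 {0..<N}"
    "f1 ` {0..<N} \<union> f2 ` {0..<N} = X"
    "\<And>j. j < N \<Longrightarrow> odd (snd (f1 j)) \<and> even (snd (f2 j))"
    using grid_facts[OF s h1 N_def] unfolding f1_def f2_def X_def by auto
  have finV: "finite V" unfolding V_def grid_V_def by simp
  have XV: "X \<subseteq> V" unfolding X_def V_def grid_V_def by auto
  have H1V: "H1 \<subseteq> V" "H2 \<subseteq> V" unfolding H1_def H2_def V_def by auto
  have f1X: "f1 j \<in> X" "f2 j \<in> X" if "j < N" for j using gf(3) that by auto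
  have gV: "g j \<in> V" "g j \<notin> X" if "j < s" for j using that unfolding g_def V_def grid_V_def X_def by auto
  have ginj: "inj_on g {0..<s}" unfolding g_def by (auto intro: inj_onI)
  have f1H: "f1 j \<notin> H1" "f2 j \<notin> H2" if "j < N" for j
    using f1X[OF that] gf(4)[OF that] unfolding X_def H1_def H2_def by auto
  have adj1: "\<exists>p\<in>H1. grid_E (f1 j) p" if "j < N" for j
  proof -
    obtain a b where ab: "f1 j = (a, b)" by (cases "f1 j")
    have c: "1 \<le> a" "a \<le> s - 1" "1 \<le> b" "b \<le> s" "odd b"
      using f1X[OF that] gf(4)[OF that] ab unfolding X_def by auto
    have "b + 1 \<le> s" using c s by presburger
    then have "(a, b + 1) \<in> H1" using c unfolding H1_def grid_V_def by auto
    moreover have "grid_E (f1 j) (a, b + 1)" using ab unfolding grid_E_def by simp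
    ultimately show ?thesis by blast
  qed
  have adj2: "\<exists>p\<in>H2. grid_E (f2 j) p" if "j < N" for j
  proof -
    obtain a b where ab: "f2 j = (a, b)" by (cases "f2 j")
    have c: "1 \<le> a" "a \<le> s - 1" "1 \<le> b" "b \<le> s" "even b"
      using f1X[OF that] gf(4)[OF that] ab unfolding X_def by auto
    have "b \<ge> 2" using c by presburger
    then have "(a, b - 1) \<in> H2" using c unfolding H2_def grid_V_def by auto
    moreover have "grid_E (f2 j) (a, b - 1)" using ab \<open>b \<ge> 2\<close> unfolding grid_E_def by simp
    ultimately show ?thesis by blast
  qed
  have adj3: "\<exists>p\<in>X. grid_E (g j) p" if "j < s" for j
  proof -
    have "(s - 1, j + 1) \<in> X" using that assms(2) unfolding X_def by auto
    moreover have "grid_E (g j) (s - 1, j + 1)" using assms(2) unfolding grid_E_def g_def by simp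
    ultimately show ?thesis by blast
  qed
  have cH1: "induces_connected grid_E H1" unfolding H1_def by (rule comb_conn) (use assms in simp)
  have cH2: "induces_connected grid_E H2" unfolding H2_def by (rule comb_conn) (use assms in simp)
  have cX: "induces_connected grid_E X" unfolding X_def by (rule rect_conn) (use assms in simp)
  have "(s, s) \<in> H1" "(s, s) \<in> H2" "(1, 1) \<in> X"
    using assms(2) unfolding H1_def H2_def X_def grid_V_def by auto
  then have neH: "H1 \<noteq> {}" "H2 \<noteq> {}" "X \<noteq> {}" by auto
  have R1s: "R1 i \<subseteq> {0..<N}" if "i < m1" for i using R1(1) that unfolding zero_one_matrix_def by auto
  have R3s: "R3 i \<subseteq> {0..<s}" if "i < m3" for i using R3(1) that unfolding zero_one_matrix_def by auto
  define m where "m = 2 * m1 + 2 + m3"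
  define R where "R = (\<lambda>i. if i = 0 then H1
     else if i < m1 + 1 then H1 \<union> f1 ` R1 (i - 1)
     else if i = m1 + 1 then H2
     else if i < 2 * m1 + 2 then H2 \<union> f2 ` R1 (i - (m1 + 2))
     else X \<union> g ` R3 (i - (2 * m1 + 2)))"
  have forms: "R i = H1 \<or> (\<exists>i'<m1. R i = H1 \<union> f1 ` R1 i') \<or> R i = H2 \<or>
     (\<exists>i'<m1. R i = H2 \<union> f2 ` R1 i') \<or> (\<exists>i'<m3. R i = X \<union> g ` R3 i')" if "i < m" for i
  proof -
    consider "i = 0" | "0 < i \<and> i < m1 + 1" | "i = m1 + 1" | "m1 + 1 < i \<and> i < 2 * m1 + 2"
      | "2 * m1 + 2 \<le> i" by linarith
    then show ?thesis
    proof cases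
      case 2 then show ?thesis unfolding R_def by (intro disjI2 disjI1 exI[of _ "i - 1"]) auto
    next
      case 4
      then have "R i = H2 \<union> f2 ` R1 (i - (m1 + 2))" "i - (m1 + 2) < m1" unfolding R_def by auto
      then show ?thesis by blast
    next
      case 5 then show ?thesis using that unfolding R_def m_def by (intro disjI2 exI[of _ "i - (2 * m1 + 2)"]) auto
    qed (auto simp: R_def)
  qed
  have sub1: "f1 ` R1 i \<subseteq> X" "f2 ` R1 i \<subseteq> X" if "i < m1" for i
    using R1s[OF that] f1X by auto
  have sub3: "g ` R3 i \<subseteq> V" if "i < m3" for i
    using R3s[OF that] gV by auto
  have ad1: "\<forall>v\<in>f1 ` R1 i. \<exists>p\<in>H1. grid_E v p" "\<forall>v\<in>f2 ` R1 i. \<exists>p\<in>H2. grid_E v p"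
    if "i < m1" for i using R1s[OF that] adj1 adj2 by auto
  have ad3: "\<forall>v\<in>g ` R3 i. \<exists>p\<in>X. grid_E v p" if "i < m3" for i
    using R3s[OF that] adj3 by auto
  have mm: "measurement_matrix V grid_E R m"
    unfolding measurement_matrix_def zero_one_matrix_def
  proof (intro conjI allI impI)
    fix i assume i: "i < m"
    from forms[OF i] show "R i \<subseteq> V"
    proof (elim disjE exE conjE)
      fix i' assume "i' < m1" "R i = H1 \<union> f1 ` R1 i'"
      then show ?thesis using H1V(1) sub1(1)[of i'] XV by blast
    next
      fix i' assume "i' < m1" "R i = H2 \<union> f2 ` R1 i'"
      then show ?thesis using H1V(2) sub1(2)[of i'] XV by blast
    next
      fix i' assume "i' < m3" "R i = X \<union> g ` R3 i'"
      then show ?thesis using sub3[of i'] XV by blast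
    next
      assume "R i = H1" then show ?thesis using H1V by blast
    next
      assume "R i = H2" then show ?thesis using H1V by blast
    qed
    assume "R i \<noteq> {}"
    from forms[OF i] show "induces_connected grid_E (R i)"
    proof (elim disjE exE conjE)
      fix i' assume "i' < m1" "R i = H1 \<union> f1 ` R1 i'"
      then show ?thesis using conn_union[of grid_E H1 "f1 ` R1 i'"] grid_E_sym cH1 neH(1) ad1(1)[of i'] by metis
    next
      fix i' assume "i' < m1" "R i = H2 \<union> f2 ` R1 i'"
      then show ?thesis using conn_union[of grid_E H2 "f2 ` R1 i'"] grid_E_sym cH2 neH(2) ad1(2)[of i'] by metis
    next
      fix i' assume "i' < m3" "R i = X \<union> g ` R3 i'"
      then show ?thesis using conn_union[of grid_E X "g ` R3 i'"] grid_E_sym cX neH(3) ad3[of i'] by metis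
    next
      assume "R i = H1" then show ?thesis using cH1 by simp
    next
      assume "R i = H2" then show ?thesis using cH2 by simp
    qed
  qed
  have idf: "identifies V R m k"
    unfolding identifies_def
  proof (intro allI impI)
    fix x1 x2 :: "nat \<times> nat \<Rightarrow> real"
    assume a: "sparse_vec V k x1 \<and> sparse_vec V k x2 \<and> x1 \<noteq> x2"
    show "\<exists>i<m. mat_apply R x1 i \<noteq> mat_apply R x2 i"
    proof (rule ccontr)
      assume "\<not> ?thesis"
      then have eq: "sum x1 (R i) = sum x2 (R i)" if "i < m" for i
        using that unfolding mat_apply_def by auto
      have finR: "finite (f ` A)" if "finite A" for f :: "nat \<Rightarrow> nat \<times> nat" and A using that by simp
      have su: "sum x (H \<union> f ` A) = sum x H + sum x (f ` A)"
        if "finite H" "A \<subseteq> {0..<M}" "\<forall>j<M. f j \<notin> H" for x :: "nat \<times> nat \<Rightarrow> real" and H and f :: "nat \<Rightarrow> nat \<times> nat" and A and M :: nat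
      proof -
        have "finite A" using that(2) by (rule finite_subset) simp
        then show ?thesis by (intro sum.union_disjoint) (use that in auto)
      qed
      have finH: "finite H1" "finite H2" "finite X" using finite_subset[OF H1V(1) finV] finite_subset[OF H1V(2) finV] finite_subset[OF XV finV] by auto
      have e0: "sum x1 H1 = sum x2 H1" using eq[of 0] unfolding R_def m_def by simp
      have e1: "\<forall>i<m1. sum x1 (f1 ` R1 i) = sum x2 (f1 ` R1 i)"
      proof (intro allI impI)
        fix i assume i: "i < m1"
        have "R (i + 1) = H1 \<union> f1 ` R1 i" unfolding R_def using i by simp
        then show "sum x1 (f1 ` R1 i) = sum x2 (f1 ` R1 i)"
          using eq[of "i + 1"] i e0 su[OF finH(1) R1s[OF i]] f1H unfolding m_def by auto
      qed
      have T1: "\<forall>j<N. x1 (f1 j) = x2 (f1 j)"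
        by (rule transport[OF R1(2) R1(1) gf(1) _ finV _ _ e1]) (use f1X XV a in auto)
      have e0': "sum x1 H2 = sum x2 H2" using eq[of "m1 + 1"] unfolding R_def m_def by simp
      have e2: "\<forall>i<m1. sum x1 (f2 ` R1 i) = sum x2 (f2 ` R1 i)"
      proof (intro allI impI)
        fix i assume i: "i < m1"
        have "R (m1 + 2 + i) = H2 \<union> f2 ` R1 i" unfolding R_def using i by simp
        then show "sum x1 (f2 ` R1 i) = sum x2 (f2 ` R1 i)"
          using eq[of "m1 + 2 + i"] i e0' su[OF finH(2) R1s[OF i]] f1H unfolding m_def by auto
      qed
      have T2: "\<forall>j<N. x1 (f2 j) = x2 (f2 j)"
        by (rule transport[OF R1(2) R1(1) gf(2) _ finV _ _ e2]) (use f1X XV a in auto)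
      have TX: "\<forall>p\<in>X. x1 p = x2 p" using T1 T2 gf(3) by auto
      have eX: "sum x1 X = sum x2 X" using TX by (intro sum.cong) auto
      have e3: "\<forall>i<m3. sum x1 (g ` R3 i) = sum x2 (g ` R3 i)"
      proof (intro allI impI)
        fix i assume i: "i < m3"
        have "R (2 * m1 + 2 + i) = X \<union> g ` R3 i" unfolding R_def using i by simp
        then show "sum x1 (g ` R3 i) = sum x2 (g ` R3 i)"
          using eq[of "2 * m1 + 2 + i"] i eX su[OF finH(3) R3s[OF i]] gV unfolding m_def by auto
      qed
      have T3: "\<forall>j<s. x1 (g j) = x2 (g j)"
        by (rule transport[OF R3(2) R3(1) ginj _ finV _ _ e3]) (use gV a in auto)
      have "x1 = x2"
      proof
        fix p
        show "x1 p = x2 p"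
        proof (cases "p \<in> V")
          case False then show ?thesis using a unfolding sparse_vec_def by metis
        next
          case True
          obtain u v where p: "p = (u, v)" by (cases p)
          have c: "1 \<le> u" "u \<le> s" "1 \<le> v" "v \<le> s" using True p unfolding V_def grid_V_def by auto
          show ?thesis
          proof (cases "u = s")
            case True
            then have "p = g (v - 1)" "v - 1 < s" using p c unfolding g_def by auto
            then show ?thesis using T3 by auto
          next
            case False
            then have "p \<in> X" using p c unfolding X_def by auto
            then show ?thesis using TX by auto
          qed
        qed
      qed
      then show False using a by simp
    qed
  qed
  have "M_G (grid_V s) grid_E k \<le> m"
    unfolding M_G_def V_def[symmetric] by (rule Least_le) (use mm idf in blast)
  then show ?thesis unfolding m_def m1_def m3_def NN by simp
qed
end
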